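(* There is an absolute constant $c$ such that the following holds. Let $G$ be a simple graph given as a stream of $m$ distinct edges, with $W\ge m$ wedges and $T\ge1$ triangles, and $\kappa=3T/W$. Fix $\beta\in(0,1)$ sufficiently small, let $\beta'=\beta/5$, and let $r_1,\dots,r_s$ be $s$ independent uniformly random edges of $G$ with $s\ge c\,m/(\beta^3\sqrt{T})$. Let $Y$ be the number of index pairs $i<j$ with $\{r_i,r_j\}$ a wedge and $Z$ the number with $\{r_i,r_j\}$ a future-closed wedge. Let $\mathcal{E}$ be the event $\max(|Y-\mathbf{E}[Y]|,|Z-\mathbf{E}[Z]|)\le\beta'\mathbf{E}[Y]$. Then $\Pr[\mathcal{E}]>1-2\beta'$, on $\mathcal{E}$ we have $Y>0$, and $|\mathbf{E}[Z/Y\mid\mathcal{E}]-\kappa/3|\le4\beta'$.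
   Context: A wedge is a path of length 2, i.e. an unordered pair of distinct edges sharing exactly one vertex; $W$ is the number of wedges of $G$. Edges carry their stream positions $e_1,\dots,e_m$. For each triangle of $G$ with edges $e_i,e_j,e_k$, $i<j<k$, the wedge $\{e_i,e_j\}$ is called future-closed; there are exactly $T$ future-closed wedges. *)

theory Defs
  imports Complex_Main "HOL-Library.FuncSet"
begin

definition edge_stream :: "'a set list \<Rightarrow> bool" where
  "edge_stream es \<longleftrightarrow> distinct es \<and> (\<forall>e\<in>set es. card e = 2)"

definition is_wedge :: "'a set \<Rightarrow> 'a set \<Rightarrow> bool" where
  "is_wedge e f \<longleftrightarrow> e \<noteq> f \<and> card (e \<inter> f) = 1"

definition num_wedges :: "'a set list \<Rightarrow> nat" where
  "num_wedges es = card {{e, f} | e f. e \<in> set es \<and> f \<in> set es \<and> is_wedge e f}"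

definition num_triangles :: "'a set list \<Rightarrow> nat" where
  "num_triangles es = card {t. card t = 3 \<and> (\<forall>u\<in>t. \<forall>v\<in>t. u \<noteq> v \<longrightarrow> {u, v} \<in> set es)}"

definition fc_pos :: "'a set list \<Rightarrow> nat \<Rightarrow> nat \<Rightarrow> bool" where
  "fc_pos es i j \<longleftrightarrow> i < j \<and> (\<exists>k. j < k \<and> k < length es \<and>
      is_wedge (es ! i) (es ! j) \<and> card (es ! i \<union> es ! j \<union> es ! k) = 3)"

definition fc_wedge_pos :: "'a set list \<Rightarrow> nat \<Rightarrow> nat \<Rightarrow> bool" where
  "fc_wedge_pos es p q \<longleftrightarrow> fc_pos es p q \<or> fc_pos es q p"

text \<open>Sample space: s independent uniform edges, encoded as sequences of stream positions
  r : {0..<s} \<rightarrow> {0..<m}, with the uniform distribution (edges are distinct, so a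
  uniform position is a uniform edge).\<close>
definition samples :: "'a set list \<Rightarrow> nat \<Rightarrow> (nat \<Rightarrow> nat) set" where
  "samples es s = PiE {0..<s} (\<lambda>_. {0..<length es})"

definition Ycount :: "'a set list \<Rightarrow> nat \<Rightarrow> (nat \<Rightarrow> nat) \<Rightarrow> nat" where
  "Ycount es s r = card {(i, j). i < j \<and> j < s \<and> is_wedge (es ! r i) (es ! r j)}"

definition Zcount :: "'a set list \<Rightarrow> nat \<Rightarrow> (nat \<Rightarrow> nat) \<Rightarrow> nat" where
  "Zcount es s r = card {(i, j). i < j \<and> j < s \<and> fc_wedge_pos es (r i) (r j)}"

definition uexp :: "'b set \<Rightarrow> ('b \<Rightarrow> real) \<Rightarrow> real" where
  "uexp \<Omega> X = (\<Sum>x\<in>\<Omega>. X x) / real (card \<Omega>)"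

definition uprob :: "'b set \<Rightarrow> ('b \<Rightarrow> bool) \<Rightarrow> real" where
  "uprob \<Omega> P = real (card {x\<in>\<Omega>. P x}) / real (card \<Omega>)"

definition ucondexp :: "'b set \<Rightarrow> ('b \<Rightarrow> bool) \<Rightarrow> ('b \<Rightarrow> real) \<Rightarrow> real" where
  "ucondexp \<Omega> P X = uexp {x\<in>\<Omega>. P x} X"

end

theory Submission
  imports Defs
begin


lemma card_fiber2:
  assumes "finite S" "\<And>x. x \<in> S \<Longrightarrow> card {y \<in> S. f y = f x} = 2"
  shows "card S = 2 * card (f ` S)"
proof -
  have "card S = (\<Sum>u\<in>f ` S. card {x \<in> S. f x = u})"
    using sum.image_gen[OF assms(1), of "\<lambda>_. 1::nat" f] by simp
  also have "\<dots> = (\<Sum>u\<in>f ` S. 2)"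
    by (rule sum.cong) (auto simp: assms(2))
  finally show ?thesis by simp
qed

lemma fin3: "card t = 3 \<Longrightarrow> finite t"
  using card.infinite by fastforce

lemma two_sub_union:
  assumes "card t = 3" "X \<subseteq> t" "Y \<subseteq> t" "card X = 2" "card Y = 2" "X \<noteq> Y"
  shows "X \<union> Y = t \<and> card (X \<inter> Y) = 1"
proof -
  have ft: "finite t" using assms(1) by (rule fin3)
  have fX: "finite X" "finite Y" using ft assms(2,3) finite_subset by auto
  have "\<not> Y \<subseteq> X"
  proof
    assume "Y \<subseteq> X" then have "Y = X" using card_subset_eq[OF fX(1)] assms(4,5) by simp
    then show False using assms(6) by simp
  qed
  then have "X \<subset> X \<union> Y" by auto
  then have "card X < card (X \<union> Y)" using fX by (intro psubset_card_mono) auto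
  moreover have "card (X \<union> Y) \<le> card t" using assms ft by (intro card_mono) auto
  ultimately have c3: "card (X \<union> Y) = 3" using assms by simp
  have "X \<union> Y = t" using card_subset_eq[OF ft, of "X \<union> Y"] assms c3 by simp
  moreover have "card (X \<union> Y) + card (X \<inter> Y) = card X + card Y"
    using card_Un_Int[OF fX] by simp
  ultimately show ?thesis using c3 assms by simp
qed

lemma two_sub_compl:
  assumes "card t = 3" "V \<subseteq> t" "card V = 2"
  shows "\<exists>x\<in>t. V = t - {x}"
proof -
  have ft: "finite t" using assms(1) by (rule fin3)
  have "card (t - V) = 1" using assms ft by (simp add: card_Diff_subset finite_subset)
  then obtain x where "t - V = {x}" by (meson card_1_singletonE)
  then show ?thesis using assms(2) by (intro bexI[of _ x]) auto
qed

lemma two_sub_three: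
  assumes "card t = 3" "X \<subseteq> t" "Y \<subseteq> t" "Z \<subseteq> t" "V \<subseteq> t"
    "card X = 2" "card Y = 2" "card Z = 2" "card V = 2"
    "X \<noteq> Y" "X \<noteq> Z" "Y \<noteq> Z"
  shows "V = X \<or> V = Y \<or> V = Z"
proof -
  obtain x where x: "x \<in> t" "X = t - {x}" using two_sub_compl[OF assms(1,2,6)] by blast
  obtain y where y: "y \<in> t" "Y = t - {y}" using two_sub_compl[OF assms(1,3,7)] by blast
  obtain z where z: "z \<in> t" "Z = t - {z}" using two_sub_compl[OF assms(1,4,8)] by blast
  obtain v where v: "v \<in> t" "V = t - {v}" using two_sub_compl[OF assms(1,5,9)] by blast
  have d: "x \<noteq> y" "x \<noteq> z" "y \<noteq> z" using x y z assms(10-12) by auto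
  have "{x,y,z} \<subseteq> t" using x y z by auto
  moreover have "card {x,y,z} = 3" using d by simp
  ultimately have "{x,y,z} = t" using assms(1) card_subset_eq[OF fin3[OF assms(1)]] by metis
  then have "v = x \<or> v = y \<or> v = z" using v by auto
  then show ?thesis using x y z v by auto
qed


lemma es_card2: "edge_stream es \<Longrightarrow> p < length es \<Longrightarrow> card (es!p) = 2"
  unfolding edge_stream_def by auto

lemma es_inj: "edge_stream es \<Longrightarrow> p < length es \<Longrightarrow> q < length es \<Longrightarrow> es!p = es!q \<longleftrightarrow> p = q"
  unfolding edge_stream_def by (simp add: nth_eq_iff_index_eq)

lemma fc_struct:
  assumes es: "edge_stream es" and f: "fc_pos es i j"
  shows "\<exists>k. i<j \<and> j<k \<and> k<length es \<and> card (es!i \<union> es!j) = 3 \<and> es!k \<subseteq> es!i \<union> es!j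
     \<and> is_wedge (es!i) (es!j)
     \<and> (\<forall>p<length es. es!p \<subseteq> es!i \<union> es!j \<longrightarrow> p = i \<or> p = j \<or> p = k)"
proof -
  obtain k where k: "i<j" "j<k" "k<length es" "is_wedge (es!i) (es!j)"
    "card (es!i \<union> es!j \<union> es!k) = 3"
    using f unfolding fc_pos_def by blast
  have c: "card (es!i) = 2" "card (es!j) = 2" "card (es!k) = 2"
    using es_card2[OF es, of i] es_card2[OF es, of j] es_card2[OF es, of k] k by auto
  have fin: "finite (es!i)" "finite (es!j)" "finite (es!k)" using c by (auto intro: card_ge_0_finite)
  have ci: "card (es!i \<inter> es!j) = 1" using k(4) unfolding is_wedge_def by simp
  have "card (es!i \<union> es!j) = 3" using card_Un_Int[OF fin(1,2)] c ci by simp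
  moreover have "es!i \<union> es!j = es!i \<union> es!j \<union> es!k"
    using card_subset_eq[of "es!i \<union> es!j \<union> es!k" "es!i \<union> es!j"] fin k(5) calculation by auto
  then have sub: "es!k \<subseteq> es!i \<union> es!j" by blast
  moreover have "\<forall>p<length es. es!p \<subseteq> es!i \<union> es!j \<longrightarrow> p = i \<or> p = j \<or> p = k"
  proof (intro allI impI)
    fix p assume p: "p < length es" "es!p \<subseteq> es!i \<union> es!j"
    have ne: "es!i \<noteq> es!j" "es!i \<noteq> es!k" "es!j \<noteq> es!k" using k es_inj[OF es] by auto
    have "es!p = es!i \<or> es!p = es!j \<or> es!p = es!k"
      using two_sub_three[OF calculation(1), of "es!i" "es!j" "es!k" "es!p"] sub p c ne
        es_card2[OF es p(1)] by blast
    then show "p = i \<or> p = j \<or> p = k" using es_inj[OF es] p k by auto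
  qed
  ultimately show ?thesis using k by blast
qed

lemma fc_unique:
  assumes es: "edge_stream es" and f1: "fc_pos es i j" and f2: "fc_pos es i' j'"
    and u: "es!i \<union> es!j = es!i' \<union> es!j'"
  shows "i = i' \<and> j = j'"
proof -
  obtain k where k: "i<j" "j<k" "k<length es" "card (es!i \<union> es!j) = 3" "es!k \<subseteq> es!i \<union> es!j"
    "\<forall>p<length es. es!p \<subseteq> es!i \<union> es!j \<longrightarrow> p = i \<or> p = j \<or> p = k"
    using fc_struct[OF es f1] by blast
  obtain k' where k': "i'<j'" "j'<k'" "k'<length es" "card (es!i' \<union> es!j') = 3" "es!k' \<subseteq> es!i' \<union> es!j'"
    "\<forall>p<length es. es!p \<subseteq> es!i' \<union> es!j' \<longrightarrow> p = i' \<or> p = j' \<or> p = k'"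
    using fc_struct[OF es f2] by blast
  have lt: "i < length es" "j < length es" "i' < length es" "j' < length es" using k k' by auto
  have a1: "i' = i \<or> i' = j \<or> i' = k" using k(6) k' u lt by auto
  have a2: "j' = i \<or> j' = j \<or> j' = k" using k(6) k' u lt by auto
  have "es!i \<subseteq> es!i' \<union> es!j'" "es!j \<subseteq> es!i' \<union> es!j'" using u by blast+
  then have b1: "i = i' \<or> i = j' \<or> i = k'" and b2: "j = i' \<or> j = j' \<or> j = k'"
    using k'(6) lt by auto
  have "i' = i" using a1 b1 k k' by auto
  moreover have "j' = j" using a2 b2 k k' calculation by auto
  ultimately show ?thesis by simp
qed


lemma is_wedge_sym: "is_wedge e f = is_wedge f e"
  unfolding is_wedge_def by (auto simp: Int_commute)

lemma wedge_count:
  assumes es: "edge_stream es"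
  shows "card {(p,q). p<length es \<and> q<length es \<and> is_wedge (es!p) (es!q)} = 2 * num_wedges es"
proof -
  define S where "S = {(p,q). p<length es \<and> q<length es \<and> is_wedge (es!p) (es!q)}"
  define f where "f = (\<lambda>(p::nat,q::nat). {es!p, es!q})"
  have fin: "finite S" unfolding S_def
    by (rule finite_subset[of _ "{..<length es} \<times> {..<length es}"]) auto
  have img: "f ` S = {{e, f} | e f. e \<in> set es \<and> f \<in> set es \<and> is_wedge e f}"
  proof
    show "f ` S \<subseteq> {{e, f} | e f. e \<in> set es \<and> f \<in> set es \<and> is_wedge e f}"
    proof
      fix x assume "x \<in> f ` S"
      then obtain p q where "x = {es!p, es!q}" "p < length es" "q < length es" "is_wedge (es!p) (es!q)"
        unfolding S_def f_def by auto
      then show "x \<in> {{e, f} | e f. e \<in> set es \<and> f \<in> set es \<and> is_wedge e f}"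
        by (blast intro: nth_mem)
    qed
    show "{{e, f} | e f. e \<in> set es \<and> f \<in> set es \<and> is_wedge e f} \<subseteq> f ` S"
    proof
      fix x assume "x \<in> {{e, f} | e f. e \<in> set es \<and> f \<in> set es \<and> is_wedge e f}"
      then obtain e g where x: "x = {e, g}" "e \<in> set es" "g \<in> set es" "is_wedge e g" by blast
      obtain p where p: "p < length es" "es!p = e" using x(2) by (auto simp: in_set_conv_nth)
      obtain q where q: "q < length es" "es!q = g" using x(3) by (auto simp: in_set_conv_nth)
      have "(p,q) \<in> S" using p q x unfolding S_def by auto
      moreover have "f (p,q) = x" using p q x unfolding f_def by auto
      ultimately show "x \<in> f ` S" by force
    qed
  qed
  have fib: "card {y\<in>S. f y = f x} = 2" if xS: "x \<in> S" for x
  proof -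
    obtain p q where x: "x = (p,q)" by (cases x)
    have pq: "p < length es" "q < length es" "is_wedge (es!p) (es!q)" using xS x unfolding S_def by auto
    have ne: "es!p \<noteq> es!q" using pq(3) unfolding is_wedge_def by auto
    then have pne: "p \<noteq> q" by auto
    have "{y\<in>S. f y = f x} = {(p,q),(q,p)}"
    proof
      show "{y\<in>S. f y = f x} \<subseteq> {(p,q),(q,p)}"
      proof
        fix y assume y: "y \<in> {y\<in>S. f y = f x}"
        obtain p' q' where y': "y = (p',q')" by (cases y)
        have pq': "p' < length es" "q' < length es" using y y' unfolding S_def by auto
        have "{es!p', es!q'} = {es!p, es!q}" using y y' x unfolding f_def by auto
        then have "(es!p' = es!p \<and> es!q' = es!q) \<or> (es!p' = es!q \<and> es!q' = es!p)"
          by (auto simp: doubleton_eq_iff)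
        then have "(p' = p \<and> q' = q) \<or> (p' = q \<and> q' = p)"
          using es_inj[OF es] pq pq' by auto
        then show "y \<in> {(p,q),(q,p)}" using y' by auto
      qed
      show "{(p,q),(q,p)} \<subseteq> {y\<in>S. f y = f x}"
        using pq x unfolding S_def f_def by (auto simp: is_wedge_sym)
    qed
    then show ?thesis using pne by simp
  qed
  have "card S = 2 * card (f ` S)" using card_fiber2[OF fin fib] by blast
  then show ?thesis using img unfolding num_wedges_def S_def by simp
qed


lemma sort3:
  assumes "(p1::nat) \<noteq> p2" "p1 \<noteq> p3" "p2 \<noteq> p3"
  shows "\<exists>i j k. i<j \<and> j<k \<and> {i,j,k} = {p1,p2,p3}"
proof -
  have "p1<p2 \<and> p2<p3 \<or> p1<p3 \<and> p3<p2 \<or> p2<p1 \<and> p1<p3 \<or> p2<p3 \<and> p3<p1 \<or> p3<p1 \<and> p1<p2 \<or> p3<p2 \<and> p2<p1"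
    using assms by arith
  then show ?thesis
  proof (elim disjE)
    assume "p1<p2 \<and> p2<p3" then show ?thesis by (intro exI[of _ p1] exI[of _ p2] exI[of _ p3]) auto
  next
    assume "p1<p3 \<and> p3<p2" then show ?thesis by (intro exI[of _ p1] exI[of _ p3] exI[of _ p2]) auto
  next
    assume "p2<p1 \<and> p1<p3" then show ?thesis by (intro exI[of _ p2] exI[of _ p1] exI[of _ p3]) auto
  next
    assume "p2<p3 \<and> p3<p1" then show ?thesis by (intro exI[of _ p2] exI[of _ p3] exI[of _ p1]) auto
  next
    assume "p3<p1 \<and> p1<p2" then show ?thesis by (intro exI[of _ p3] exI[of _ p1] exI[of _ p2]) auto
  next
    assume "p3<p2 \<and> p2<p1" then show ?thesis by (intro exI[of _ p3] exI[of _ p2] exI[of _ p1]) auto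
  qed
qed

lemma tri_to_fc:
  assumes es: "edge_stream es" and t: "card t = 3" and ijk: "i<j" "j<k" "k<length es"
    and sub: "es!i \<subseteq> t" "es!j \<subseteq> t" "es!k \<subseteq> t"
  shows "fc_pos es i j \<and> es!i \<union> es!j = t"
proof -
  have c: "card (es!i) = 2" "card (es!j) = 2" "card (es!k) = 2"
    using es_card2[OF es, of i] es_card2[OF es, of j] es_card2[OF es, of k] ijk by auto
  have ne: "es!i \<noteq> es!j" using es_inj[OF es, of i j] ijk by auto
  have u: "es!i \<union> es!j = t" "card (es!i \<inter> es!j) = 1"
    using two_sub_union[OF t sub(1,2) c(1,2) ne] by auto
  have w: "is_wedge (es!i) (es!j)" using ne u unfolding is_wedge_def by auto
  have "es!i \<union> es!j \<union> es!k = t" using u sub by auto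
  then have "card (es!i \<union> es!j \<union> es!k) = 3" using t by simp
  then show ?thesis using w ijk u unfolding fc_pos_def by blast
qed

lemma fc_tri:
  assumes es: "edge_stream es" and f: "fc_pos es i j"
  shows "es!i \<union> es!j \<in> {t. card t = 3 \<and> (\<forall>u\<in>t. \<forall>v\<in>t. u \<noteq> v \<longrightarrow> {u, v} \<in> set es)}"
proof -
  obtain k where k: "i<j" "j<k" "k<length es" "card (es!i \<union> es!j) = 3" "es!k \<subseteq> es!i \<union> es!j"
    using fc_struct[OF es f] by blast
  let ?t = "es!i \<union> es!j"
  have c: "card (es!i) = 2" "card (es!j) = 2" "card (es!k) = 2"
    using es_card2[OF es, of i] es_card2[OF es, of j] es_card2[OF es, of k] k by auto
  have ne: "es!i \<noteq> es!j" "es!i \<noteq> es!k" "es!j \<noteq> es!k" using k es_inj[OF es] by auto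
  have mem: "es!i \<in> set es" "es!j \<in> set es" "es!k \<in> set es" using k by auto
  have "{u, v} \<in> set es" if uv: "u \<in> ?t" "v \<in> ?t" "u \<noteq> v" for u v
  proof -
    have "{u,v} = es!i \<or> {u,v} = es!j \<or> {u,v} = es!k"
      using two_sub_three[OF k(4), of "es!i" "es!j" "es!k" "{u,v}"] uv c ne k(5) by auto
    then show ?thesis using mem by auto
  qed
  then show ?thesis using k(4) by blast
qed

lemma fc_count:
  assumes es: "edge_stream es"
  shows "card {(p,q). p<length es \<and> q<length es \<and> fc_wedge_pos es p q} = 2 * num_triangles es"
proof -
  define S where "S = {(p,q). p<length es \<and> q<length es \<and> fc_wedge_pos es p q}"
  define Tr where "Tr = {t. card t = 3 \<and> (\<forall>u\<in>t. \<forall>v\<in>t. u \<noteq> v \<longrightarrow> {u, v} \<in> set es)}"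
  define f where "f = (\<lambda>(p::nat,q::nat). es!p \<union> es!q)"
  have fin: "finite S" unfolding S_def
    by (rule finite_subset[of _ "{..<length es} \<times> {..<length es}"]) auto
  have fcl: "i < length es \<and> j < length es" if "fc_pos es i j" for i j
    using that unfolding fc_pos_def by auto
  have img: "f ` S = Tr"
  proof
    show "f ` S \<subseteq> Tr"
    proof
      fix x assume "x \<in> f ` S"
      then obtain p q where x: "x = es!p \<union> es!q" "fc_pos es p q \<or> fc_pos es q p"
        unfolding S_def f_def fc_wedge_pos_def by auto
      then show "x \<in> Tr" unfolding Tr_def using fc_tri[OF es, of p q] fc_tri[OF es, of q p]
        by (auto simp: Un_commute)
    qed
    show "Tr \<subseteq> f ` S"
    proof
      fix t assume "t \<in> Tr"
      then have t: "card t = 3" "\<forall>u\<in>t. \<forall>v\<in>t. u \<noteq> v \<longrightarrow> {u, v} \<in> set es" unfolding Tr_def by auto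
      obtain a b c where abc: "t = {a,b,c}" "a \<noteq> b" "b \<noteq> c" "a \<noteq> c" using t(1) card_3_iff by metis
      have "{a,b} \<in> set es" "{b,c} \<in> set es" "{a,c} \<in> set es" using t(2) abc by auto
      then obtain p1 p2 p3 where p: "p1 < length es" "es!p1 = {a,b}" "p2 < length es" "es!p2 = {b,c}"
        "p3 < length es" "es!p3 = {a,c}" by (metis in_set_conv_nth)
      have d: "p1 \<noteq> p2" "p1 \<noteq> p3" "p2 \<noteq> p3" using p abc by (auto simp: doubleton_eq_iff)
      obtain i j k where ijk: "i<j" "j<k" "{i,j,k} = {p1,p2,p3}" using sort3[OF d] by blast
      have sub: "\<And>x. x \<in> {p1,p2,p3} \<Longrightarrow> es!x \<subseteq> t \<and> x < length es" using p abc by auto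
      have "i \<in> {p1,p2,p3}" "j \<in> {p1,p2,p3}" "k \<in> {p1,p2,p3}" using ijk(3) by blast+
      then have "es!i \<subseteq> t" "es!j \<subseteq> t" "es!k \<subseteq> t" "k < length es" using sub by blast+
      then have "fc_pos es i j \<and> es!i \<union> es!j = t" using tri_to_fc[OF es t(1) ijk(1,2)] by blast
      moreover then have "(i,j) \<in> S" using fcl unfolding S_def fc_wedge_pos_def by auto
      ultimately show "t \<in> f ` S" unfolding f_def by force
    qed
  qed
  have fib: "card {y\<in>S. f y = f x} = 2" if xS: "x \<in> S" for x
  proof -
    obtain i j where ij: "fc_pos es i j" "x = (i,j) \<or> x = (j,i)"
      using xS unfolding S_def fc_wedge_pos_def by auto
    have fx: "f x = es!i \<union> es!j" using ij(2) unfolding f_def by (auto simp: Un_commute)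
    have ine: "i \<noteq> j" using ij(1) unfolding fc_pos_def by auto
    have "{y\<in>S. f y = f x} = {(i,j),(j,i)}"
    proof
      show "{y\<in>S. f y = f x} \<subseteq> {(i,j),(j,i)}"
      proof
        fix y assume y: "y \<in> {y\<in>S. f y = f x}"
        obtain p q where y': "y = (p,q)" by (cases y)
        have "fc_pos es p q \<or> fc_pos es q p" using y y' unfolding S_def fc_wedge_pos_def by auto
        moreover have "es!p \<union> es!q = es!i \<union> es!j" "es!q \<union> es!p = es!i \<union> es!j"
          using y y' fx unfolding f_def by auto
        ultimately show "y \<in> {(i,j),(j,i)}" using fc_unique[OF es _ ij(1)] y' by blast
      qed
      show "{(i,j),(j,i)} \<subseteq> {y\<in>S. f y = f x}"
        using ij(1) fcl[OF ij(1)] fx unfolding S_def f_def fc_wedge_pos_def by (auto simp: Un_commute)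
    qed
    then show ?thesis using ine by simp
  qed
  have "card S = 2 * card (f ` S)" using card_fiber2[OF fin fib] by blast
  then show ?thesis using img unfolding num_triangles_def S_def Tr_def by simp
qed


lemma sq_sum_le: "((a::nat) + b)^2 \<le> 2 * (a^2 + b^2)"
proof -
  have "0 \<le> (int a - int b)^2" by simp
  then have "(int a + int b)^2 \<le> 2 * (int a^2 + int b^2)" by (simp add: power2_eq_square algebra_simps)
  then have "int ((a+b)^2) \<le> int (2*(a^2+b^2))" by simp
  then show ?thesis by (simp only: of_nat_le_iff)
qed

lemma card_offdiag:
  assumes "finite X"
  shows "card {(x,y). x \<in> X \<and> y \<in> X \<and> x \<noteq> y} = card X * card X - card X"
proof -
  have e: "{(x,y). x \<in> X \<and> y \<in> X \<and> x \<noteq> y} = X \<times> X - (\<lambda>x. (x,x)) ` X" by auto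
  have "card ((\<lambda>x. (x,x)) ` X) = card X" by (rule card_image) (auto simp: inj_on_def)
  moreover have "card (X \<times> X - (\<lambda>x. (x,x)) ` X) = card (X \<times> X) - card ((\<lambda>x. (x,x)) ` X)"
    by (rule card_Diff_subset) (auto intro: finite_imageI assms)
  ultimately show ?thesis using e by (simp add: card_cartesian_product)
qed

lemma two_share:
  assumes "card X = 2" "card Y = 2" "X \<noteq> Y" "u \<in> X" "u \<in> Y"
  shows "card (X \<inter> Y) = 1"
proof -
  have fX: "finite X" "finite Y" using assms by (auto intro: card_ge_0_finite)
  have "X \<inter> Y \<noteq> X"
  proof
    assume "X \<inter> Y = X" then have "X \<subseteq> Y" by blast
    then have "X = Y" using card_subset_eq[OF fX(2)] assms by simp
    then show False using assms by simp
  qed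
  then have "card (X \<inter> Y) < card X" using fX by (intro psubset_card_mono) auto
  moreover have "X \<inter> Y \<noteq> {}" using assms(4,5) by blast
  then have "card (X \<inter> Y) \<ge> 1" using fX by (simp add: card_gt_0_iff Suc_le_eq)
  ultimately show ?thesis using assms by simp
qed

lemma deg_bound:
  assumes es: "edge_stream es" and p: "p < length es"
  shows "(card {q. q<length es \<and> is_wedge (es!p) (es!q)})^2
     \<le> 2 * card {(p,q). p<length es \<and> q<length es \<and> is_wedge (es!p) (es!q)}"
proof -
  define m where "m = length es"
  define S where "S = {(p,q). p<m \<and> q<m \<and> is_wedge (es!p) (es!q)}"
  obtain u v where uv: "es!p = {u,v}" "u \<noteq> v" using es_card2[OF es p] card_2_iff by metis
  define Au where "Au = {q. q<m \<and> q\<noteq>p \<and> u \<in> es!q}"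
  define Av where "Av = {q. q<m \<and> q\<noteq>p \<and> v \<in> es!q}"
  have finA: "finite Au" "finite Av" unfolding Au_def Av_def by auto
  have "{q. q<m \<and> is_wedge (es!p) (es!q)} \<subseteq> Au \<union> Av"
  proof
    fix q assume q: "q \<in> {q. q<m \<and> is_wedge (es!p) (es!q)}"
    then have "es!p \<noteq> es!q" "card (es!p \<inter> es!q) = 1" unfolding is_wedge_def by auto
    then have "q \<noteq> p" "es!p \<inter> es!q \<noteq> {}" by auto
    then show "q \<in> Au \<union> Av" using q uv unfolding Au_def Av_def by auto
  qed
  then have d: "card {q. q<m \<and> is_wedge (es!p) (es!q)} \<le> card Au + card Av"
    using card_mono[OF finite_UnI[OF finA]] card_Un_le[of Au Av] by (meson le_trans)
  define od where "od = (\<lambda>X::nat set. {(x,y). x \<in> X \<and> y \<in> X \<and> x \<noteq> y})"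
  have memw: "od (insert p A) \<subseteq> S" if A: "A = Au \<or> A = Av" for A
  proof
    fix z assume z: "z \<in> od (insert p A)"
    obtain x y where xy: "z = (x,y)" "x \<in> insert p A" "y \<in> insert p A" "x \<noteq> y"
      using z unfolding od_def by auto
    have "\<exists>w. \<forall>q \<in> insert p A. w \<in> es!q \<and> q < m"
    proof (cases "A = Au")
      case True then show ?thesis using uv p unfolding Au_def m_def by (intro exI[of _ u]) auto
    next
      case False then have "A = Av" using A by simp
      then show ?thesis using uv p unfolding Av_def m_def by (intro exI[of _ v]) auto
    qed
    then obtain w where ww: "\<forall>q \<in> insert p A. w \<in> es!q \<and> q < m" by blast
    then have w: "w \<in> es!x" "w \<in> es!y" "\<And>q. q \<in> insert p A \<Longrightarrow> w \<in> es!q \<and> q < m"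
      using xy by auto
    have lt: "x < m" "y < m" using w(3) xy by auto
    have "es!x \<noteq> es!y" using es_inj[OF es] lt xy(4) unfolding m_def by auto
    then have "card (es!x \<inter> es!y) = 1"
      using two_share[of "es!x" "es!y" w] es_card2[OF es] lt w unfolding m_def by auto
    then show "z \<in> S" using \<open>es!x \<noteq> es!y\<close> lt xy unfolding S_def is_wedge_def by auto
  qed
  have disj: "od (insert p Au) \<inter> od (insert p Av) = {}"
  proof (rule ccontr)
    assume "od (insert p Au) \<inter> od (insert p Av) \<noteq> {}"
    then obtain x y where xy: "x \<in> insert p Au" "y \<in> insert p Au" "x \<in> insert p Av" "y \<in> insert p Av" "x \<noteq> y"
      unfolding od_def by auto
    then obtain z where z: "z \<in> Au" "z \<in> Av" by auto
    then have "es!p \<subseteq> es!z" "z < m" "z \<noteq> p" using uv unfolding Au_def Av_def by auto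
    moreover have "card (es!z) = 2" "card (es!p) = 2" using es_card2[OF es] p \<open>z < m\<close> unfolding m_def by auto
    moreover then have "finite (es!z)" by (intro card_ge_0_finite) auto
    ultimately have "es!p = es!z" using card_subset_eq[of "es!z" "es!p"] by auto
    then show False using es_inj[OF es] p \<open>z < m\<close> \<open>z \<noteq> p\<close> unfolding m_def by auto
  qed
  have finS: "finite S" unfolding S_def
    by (rule finite_subset[of _ "{..<m} \<times> {..<m}"]) auto
  have "card (od (insert p Au)) + card (od (insert p Av)) = card (od (insert p Au) \<union> od (insert p Av))"
    using card_Un_disjoint[OF finite_subset[OF memw finS] finite_subset[OF memw finS] disj] by simp
  also have "\<dots> \<le> card S" using memw finS by (intro card_mono) auto
  finally have cS: "card (od (insert p Au)) + card (od (insert p Av)) \<le> card S" .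
  have pA: "p \<notin> Au" "p \<notin> Av" unfolding Au_def Av_def by auto
  have "card (od (insert p Au)) = (card Au + 1) * (card Au + 1) - (card Au + 1)"
    unfolding od_def using card_offdiag[of "insert p Au"] finA pA by simp
  moreover have "card (od (insert p Av)) = (card Av + 1) * (card Av + 1) - (card Av + 1)"
    unfolding od_def using card_offdiag[of "insert p Av"] finA pA by simp
  ultimately have "(card Au)^2 + (card Av)^2 \<le> card S" using cS by (simp add: power2_eq_square)
  moreover have "(card {q. q<m \<and> is_wedge (es!p) (es!q)})^2 \<le> (card Au + card Av)^2"
    using d by (simp add: power_mono)
  ultimately have "(card {q. q<m \<and> is_wedge (es!p) (es!q)})^2 \<le> 2 * card S"
    using le_trans[OF _ sq_sum_le[of "card Au" "card Av"]] by (meson le_trans mult_le_mono2)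
  then show ?thesis unfolding S_def m_def .
qed



lemma sum_PiE_peel:
  assumes "finite I" "i \<in> I"
  shows "(\<Sum>r\<in>PiE I (\<lambda>_. B). F r) = (\<Sum>a\<in>B. \<Sum>r\<in>PiE (I-{i}) (\<lambda>_. B). (F (r(i:=a)) :: real))"
proof -
  have I: "I = insert i (I-{i})" using assms by auto
  have "(\<Sum>r\<in>PiE I (\<lambda>_. B). F r) = (\<Sum>r\<in>PiE (insert i (I-{i})) (\<lambda>_. B). F r)"
    using I by simp
  also have "\<dots> = (\<Sum>r\<in>(\<lambda>(y, g). g(i := y)) ` (B \<times> PiE (I-{i}) (\<lambda>_. B)). F r)"
    by (simp only: PiE_insert_eq)
  also have "\<dots> = (\<Sum>x\<in>B \<times> PiE (I-{i}) (\<lambda>_. B). F ((\<lambda>(y, g). g(i := y)) x))"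
    by (rule sum.reindex[unfolded comp_def]) (rule inj_combinator, simp)
  also have "\<dots> = (\<Sum>(a,r)\<in>B \<times> PiE (I-{i}) (\<lambda>_. B). F (r(i:=a)))"
    by (rule sum.cong) auto
  also have "\<dots> = (\<Sum>a\<in>B. \<Sum>r\<in>PiE (I-{i}) (\<lambda>_. B). F (r(i:=a)))"
    by (simp add: sum.cartesian_product)
  finally show ?thesis .
qed

lemma card_PiE_const: "finite I \<Longrightarrow> card (PiE I (\<lambda>_. B)) = card B ^ card I"
  by (simp add: card_PiE)

lemma sum_PiE2:
  assumes "finite I" "i \<in> I" "j \<in> I" "i \<noteq> j"
  shows "(\<Sum>r\<in>PiE I (\<lambda>_. B). (f (r i) (r j) :: real)) = real (card B) ^ (card I - 2) * (\<Sum>a\<in>B. \<Sum>b\<in>B. f a b)"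
proof -
  have "(\<Sum>r\<in>PiE I (\<lambda>_. B). f (r i) (r j)) = (\<Sum>a\<in>B. \<Sum>r\<in>PiE (I-{i}) (\<lambda>_. B). f a (r j))"
    using sum_PiE_peel[OF assms(1,2), of "\<lambda>r. f (r i) (r j)" B] assms(4) by simp
  also have "\<dots> = (\<Sum>a\<in>B. \<Sum>b\<in>B. \<Sum>r\<in>PiE (I-{i}-{j}) (\<lambda>_. B). f a b)"
    by (intro sum.cong refl, subst sum_PiE_peel[of "I-{i}" j]) (use assms in auto)
  also have "\<dots> = (\<Sum>a\<in>B. \<Sum>b\<in>B. real (card B) ^ (card I - 2) * f a b)"
    using assms by (simp add: card_PiE_const card_Diff_singleton_if eval_nat_numeral)
  finally show ?thesis by (simp add: sum_distrib_left)
qed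

lemma sum_PiE3:
  assumes "finite I" "i \<in> I" "j \<in> I" "k \<in> I" "i \<noteq> j" "i \<noteq> k" "j \<noteq> k"
  shows "(\<Sum>r\<in>PiE I (\<lambda>_. B). (f (r i) (r j) (r k) :: real))
     = real (card B) ^ (card I - 3) * (\<Sum>a\<in>B. \<Sum>b\<in>B. \<Sum>c\<in>B. f a b c)"
proof -
  have "(\<Sum>r\<in>PiE I (\<lambda>_. B). f (r i) (r j) (r k)) = (\<Sum>a\<in>B. \<Sum>r\<in>PiE (I-{i}) (\<lambda>_. B). f a (r j) (r k))"
    using sum_PiE_peel[OF assms(1,2), of "\<lambda>r. f (r i) (r j) (r k)" B] assms by simp
  also have "\<dots> = (\<Sum>a\<in>B. \<Sum>b\<in>B. \<Sum>r\<in>PiE (I-{i}-{j}) (\<lambda>_. B). f a b (r k))"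
    by (intro sum.cong refl, subst sum_PiE_peel[of "I-{i}" j]) (use assms in auto)
  also have "\<dots> = (\<Sum>a\<in>B. \<Sum>b\<in>B. \<Sum>c\<in>B. \<Sum>r\<in>PiE (I-{i}-{j}-{k}) (\<lambda>_. B). f a b c)"
    by (intro sum.cong refl, subst sum_PiE_peel[of "I-{i}-{j}" k]) (use assms in auto)
  also have "\<dots> = (\<Sum>a\<in>B. \<Sum>b\<in>B. \<Sum>c\<in>B. real (card B) ^ (card I - 3) * f a b c)"
    using assms by (simp add: card_PiE_const card_Diff_singleton_if eval_nat_numeral)
  finally show ?thesis by (simp add: sum_distrib_left)
qed

lemma sum_PiE4:
  assumes "finite I" "i \<in> I" "j \<in> I" "k \<in> I" "l \<in> I" "i \<noteq> j" "i \<noteq> k" "j \<noteq> k"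
    "i \<noteq> l" "j \<noteq> l" "k \<noteq> l"
  shows "(\<Sum>r\<in>PiE I (\<lambda>_. B). (f (r i) (r j) (r k) (r l) :: real))
     = real (card B) ^ (card I - 4) * (\<Sum>a\<in>B. \<Sum>b\<in>B. \<Sum>c\<in>B. \<Sum>d\<in>B. f a b c d)"
proof -
  have "(\<Sum>r\<in>PiE I (\<lambda>_. B). f (r i) (r j) (r k) (r l)) = (\<Sum>a\<in>B. \<Sum>r\<in>PiE (I-{i}) (\<lambda>_. B). f a (r j) (r k) (r l))"
    using sum_PiE_peel[OF assms(1,2), of "\<lambda>r. f (r i) (r j) (r k) (r l)" B] assms by simp
  also have "\<dots> = (\<Sum>a\<in>B. \<Sum>b\<in>B. \<Sum>r\<in>PiE (I-{i}-{j}) (\<lambda>_. B). f a b (r k) (r l))"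
    by (intro sum.cong refl, subst sum_PiE_peel[of "I-{i}" j]) (use assms in auto)
  also have "\<dots> = (\<Sum>a\<in>B. \<Sum>b\<in>B. \<Sum>c\<in>B. \<Sum>r\<in>PiE (I-{i}-{j}-{k}) (\<lambda>_. B). f a b c (r l))"
    by (intro sum.cong refl, subst sum_PiE_peel[of "I-{i}-{j}" k]) (use assms in auto)
  also have "\<dots> = (\<Sum>a\<in>B. \<Sum>b\<in>B. \<Sum>c\<in>B. \<Sum>d\<in>B. \<Sum>r\<in>PiE (I-{i}-{j}-{k}-{l}) (\<lambda>_. B). f a b c d)"
    by (intro sum.cong refl, subst sum_PiE_peel[of "I-{i}-{j}-{k}" l]) (use assms in auto)
  also have "\<dots> = (\<Sum>a\<in>B. \<Sum>b\<in>B. \<Sum>c\<in>B. \<Sum>d\<in>B. real (card B) ^ (card I - 4) * f a b c d)"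
    using assms by (simp add: card_PiE_const card_Diff_singleton_if eval_nat_numeral)
  finally show ?thesis by (simp add: sum_distrib_left)
qed


definition ind :: "bool \<Rightarrow> real" where "ind b = (if b then 1 else 0)"
definition Prs :: "nat \<Rightarrow> (nat \<times> nat) set" where "Prs s = {(i,j). i<j \<and> j<s}"
definition cnt :: "(nat\<Rightarrow>nat\<Rightarrow>bool) \<Rightarrow> nat \<Rightarrow> (nat\<Rightarrow>nat) \<Rightarrow> real" where
  "cnt g s r = (\<Sum>P\<in>Prs s. ind (g (r (fst P)) (r (snd P))))"
definition Gs :: "(nat\<Rightarrow>nat\<Rightarrow>bool) \<Rightarrow> nat \<Rightarrow> real" where
  "Gs g m = (\<Sum>a\<in>{0..<m}. \<Sum>b\<in>{0..<m}. ind (g a b))"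
definition dg :: "(nat\<Rightarrow>nat\<Rightarrow>bool) \<Rightarrow> nat \<Rightarrow> nat \<Rightarrow> real" where
  "dg w m a = (\<Sum>b\<in>{0..<m}. ind (w a b))"

lemma ind_ge0[simp]: "ind b \<ge> 0" and ind_le1: "ind b \<le> 1" and ind_sq: "ind b * ind b = ind b"
  by (auto simp: ind_def)

lemma sum_ind: "finite A \<Longrightarrow> (\<Sum>x\<in>A. ind (P x)) = real (card {x\<in>A. P x})"
  by (simp add: ind_def sum.If_cases Int_def)

lemma finite_Prs[simp]: "finite (Prs s)"
  unfolding Prs_def by (rule finite_subset[of _ "{..<s} \<times> {..<s}"]) auto

lemma card_Prs: "2 * card (Prs s) = s * (s - 1)"
proof (induction s)
  case 0 then show ?case by (simp add: Prs_def)
next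
  case (Suc s)
  have e: "Prs (Suc s) = Prs s \<union> (\<lambda>i. (i,s)) ` {..<s}" unfolding Prs_def by auto
  have d: "Prs s \<inter> (\<lambda>i. (i,s)) ` {..<s} = {}" unfolding Prs_def by auto
  have "card ((\<lambda>i. (i,s)) ` {..<s}) = s" by (subst card_image) (auto simp: inj_on_def)
  then have "card (Prs (Suc s)) = card (Prs s) + s" using e d card_Un_disjoint[of "Prs s"] by simp
  then show ?case using Suc by (cases s) (auto simp: algebra_simps)
qed

lemma cnt_card: "real (card {(i, j). i<j \<and> j<s \<and> g (r i) (r j)}) = cnt g s r"
proof -
  have "{(i, j). i<j \<and> j<s \<and> g (r i) (r j)} = {P\<in>Prs s. g (r (fst P)) (r (snd P))}"
    unfolding Prs_def by auto
  then show ?thesis unfolding cnt_def by (simp add: sum_ind)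
qed

lemma Gs_card: "real (card {(p,q). p<m \<and> q<m \<and> g p q}) = Gs g m"
proof -
  have "{(p,q). p<m \<and> q<m \<and> g p q} = {x\<in>{0..<m}\<times>{0..<m}. g (fst x) (snd x)}" by auto
  then have "real (card {(p,q). p<m \<and> q<m \<and> g p q}) = (\<Sum>x\<in>{0..<m}\<times>{0..<m}. ind (g (fst x) (snd x)))"
    by (simp add: sum_ind)
  also have "\<dots> = (\<Sum>(a,b)\<in>{0..<m}\<times>{0..<m}. ind (g a b))" by (rule sum.cong) auto
  also have "\<dots> = Gs g m" unfolding Gs_def by (simp add: sum.cartesian_product)
  finally show ?thesis .
qed

lemma first_moment:
  assumes "s \<ge> 2"
  shows "(\<Sum>r\<in>PiE {0..<s} (\<lambda>_. {0..<m}). cnt g s r) = real (card (Prs s)) * real m ^ (s-2) * Gs g m"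
proof -
  have "(\<Sum>r\<in>PiE {0..<s} (\<lambda>_. {0..<m}). cnt g s r)
      = (\<Sum>P\<in>Prs s. \<Sum>r\<in>PiE {0..<s} (\<lambda>_. {0..<m}). ind (g (r (fst P)) (r (snd P))))"
    unfolding cnt_def by (rule sum.swap)
  also have "\<dots> = (\<Sum>P\<in>Prs s. real m ^ (s-2) * Gs g m)"
  proof (rule sum.cong[OF refl])
    fix P assume "P \<in> Prs s"
    then show "(\<Sum>r\<in>PiE {0..<s} (\<lambda>_. {0..<m}). ind (g (r (fst P)) (r (snd P)))) = real m ^ (s-2) * Gs g m"
      using sum_PiE2[of "{0..<s}" "fst P" "snd P" "\<lambda>a b. ind (g a b)" "{0..<m}"]
      unfolding Prs_def Gs_def by auto
  qed
  finally show ?thesis by simp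
qed


definition nd :: "nat \<times> nat \<Rightarrow> nat \<times> nat \<Rightarrow> bool" where
  "nd P Q \<longleftrightarrow> fst Q = fst P \<or> fst Q = snd P \<or> snd Q = fst P \<or> snd Q = snd P"

lemma ind_prod_le: "(A \<longrightarrow> C) \<Longrightarrow> (B \<longrightarrow> D) \<Longrightarrow> ind A * ind B \<le> ind C * ind D"
  by (simp add: ind_def)

lemma Gs_ge0: "Gs g m \<ge> 0" unfolding Gs_def by (intro sum_nonneg) auto

lemma Gs_mono: "(\<And>a b. g a b \<Longrightarrow> w a b) \<Longrightarrow> Gs g m \<le> Gs w m"
  unfolding Gs_def by (intro sum_mono) (auto simp: ind_def)

lemma term_bound:
  fixes g w :: "nat \<Rightarrow> nat \<Rightarrow> bool"
  assumes gw: "\<And>a b. g a b \<Longrightarrow> w a b" and ws: "\<And>a b. w a b = w b a"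
    and P: "P \<in> Prs s" and Q: "Q \<in> Prs s"
  shows "(\<Sum>r\<in>PiE {0..<s} (\<lambda>_. {0..<m}). ind (g (r (fst P)) (r (snd P))) * ind (g (r (fst Q)) (r (snd Q))))
    \<le> real m ^ (s-4) * (Gs g m)^2 + ind (P = Q) * (real m ^ (s-2) * Gs w m)
       + ind (nd P Q) * (real m ^ (s-3) * (\<Sum>a\<in>{0..<m}. (dg w m a)^2))"
    (is "?L \<le> ?A + ?B + ?C")
proof -
  obtain i j k l where ij: "P = (i,j)" "Q = (k,l)" by (cases P, cases Q) auto
  have lt: "i<j" "j<s" "k<l" "l<s" using P Q ij unfolding Prs_def by auto
  have A0: "?A \<ge> 0" by simp
  have B0: "?B \<ge> 0" using Gs_ge0[of w m] by simp
  have D0: "(\<Sum>a\<in>{0..<m}. (dg w m a)^2) \<ge> 0" by (intro sum_nonneg) auto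
  have C0: "?C \<ge> 0" using D0 by simp
  let ?I = "{0..<s}" and ?S = "{0..<m}"
  show ?thesis
  proof (cases "nd P Q")
    case False
    then have d: "i \<noteq> k" "i \<noteq> l" "j \<noteq> k" "j \<noteq> l" using ij unfolding nd_def by auto
    have "?L = real m ^ (s-4) * (\<Sum>a\<in>?S. \<Sum>b\<in>?S. \<Sum>c\<in>?S. \<Sum>d\<in>?S. ind (g a b) * ind (g c d))"
      using sum_PiE4[of ?I i j k l "\<lambda>a b c d. ind (g a b) * ind (g c d)" ?S] lt d ij by auto
    also have "(\<Sum>a\<in>?S. \<Sum>b\<in>?S. \<Sum>c\<in>?S. \<Sum>d\<in>?S. ind (g a b) * ind (g c d)) = (Gs g m)^2"
      unfolding Gs_def power2_eq_square sum_distrib_left sum_distrib_right by (simp add: mult.commute)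
    finally show ?thesis using B0 C0 by simp
  next
    case True
    show ?thesis
    proof (cases "P = Q")
      case True
      then have "?L = (\<Sum>r\<in>PiE ?I (\<lambda>_. ?S). ind (g (r i) (r j)))" using ij by (simp add: ind_sq)
      also have "\<dots> = real m ^ (s-2) * Gs g m"
        using sum_PiE2[of ?I i j "\<lambda>a b. ind (g a b)" ?S] lt unfolding Gs_def by auto
      also have "\<dots> \<le> real m ^ (s-2) * Gs w m" using Gs_mono[of g w m] gw by (intro mult_left_mono) auto
      finally have L: "?L \<le> real m ^ (s-2) * Gs w m" .
      have "?B = real m ^ (s-2) * Gs w m" using True by (simp add: ind_def)
      then show ?thesis using L A0 C0 by linarith
    next
      case False
      have "\<exists>x y z. x < s \<and> y < s \<and> z < s \<and> x \<noteq> y \<and> x \<noteq> z \<and> y \<noteq> z \<and>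
         (\<forall>r. ind (g (r i) (r j)) * ind (g (r k) (r l)) \<le> ind (w (r x) (r y)) * ind (w (r x) (r z)))"
      proof -
        consider "k = i" | "l = i" | "k = j" | "l = j" using \<open>nd P Q\<close> ij unfolding nd_def by auto
        then show ?thesis
        proof cases
          case 1 then have "j \<noteq> l" using False ij by auto
          moreover have "\<forall>r. ind (g (r i) (r j)) * ind (g (r k) (r l)) \<le> ind (w (r i) (r j)) * ind (w (r i) (r l))"
            using 1 gw ws by (intro allI ind_prod_le) metis+
          ultimately show ?thesis using 1 lt by (intro exI[of _ i] exI[of _ j] exI[of _ l]) auto
        next
          case 2 then have "j \<noteq> k" using lt by auto
          moreover have "\<forall>r. ind (g (r i) (r j)) * ind (g (r k) (r l)) \<le> ind (w (r i) (r j)) * ind (w (r i) (r k))"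
            using 2 gw ws by (intro allI ind_prod_le) metis+
          ultimately show ?thesis using 2 lt by (intro exI[of _ i] exI[of _ j] exI[of _ k]) auto
        next
          case 3 then have "i \<noteq> l" using lt by auto
          moreover have "\<forall>r. ind (g (r i) (r j)) * ind (g (r k) (r l)) \<le> ind (w (r j) (r i)) * ind (w (r j) (r l))"
            using 3 gw ws by (intro allI ind_prod_le) metis+
          ultimately show ?thesis using 3 lt by (intro exI[of _ j] exI[of _ i] exI[of _ l]) auto
        next
          case 4 then have "i \<noteq> k" using False ij by auto
          moreover have "\<forall>r. ind (g (r i) (r j)) * ind (g (r k) (r l)) \<le> ind (w (r j) (r i)) * ind (w (r j) (r k))"
            using 4 gw ws by (intro allI ind_prod_le) metis+
          ultimately show ?thesis using 4 lt by (intro exI[of _ j] exI[of _ i] exI[of _ k]) auto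
        qed
      qed
      then obtain x y z where xyz: "x < s" "y < s" "z < s" "x \<noteq> y" "x \<noteq> z" "y \<noteq> z"
        "\<And>r. ind (g (r i) (r j)) * ind (g (r k) (r l)) \<le> ind (w (r x) (r y)) * ind (w (r x) (r z))" by blast
      have "?L \<le> (\<Sum>r\<in>PiE ?I (\<lambda>_. ?S). ind (w (r x) (r y)) * ind (w (r x) (r z)))"
        using ij xyz(7) by (auto intro: sum_mono)
      also have "\<dots> = real m ^ (s-3) * (\<Sum>a\<in>?S. \<Sum>b\<in>?S. \<Sum>c\<in>?S. ind (w a b) * ind (w a c))"
        using sum_PiE3[of ?I x y z "\<lambda>a b c. ind (w a b) * ind (w a c)" ?S] xyz by auto
      also have "(\<Sum>a\<in>?S. \<Sum>b\<in>?S. \<Sum>c\<in>?S. ind (w a b) * ind (w a c)) = (\<Sum>a\<in>?S. (dg w m a)^2)"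
        unfolding dg_def power2_eq_square sum_distrib_left sum_distrib_right by (simp add: mult.commute)
      finally have L: "?L \<le> real m ^ (s-3) * (\<Sum>a\<in>{0..<m}. (dg w m a)^2)" .
      have "?C = real m ^ (s-3) * (\<Sum>a\<in>{0..<m}. (dg w m a)^2)" using \<open>nd P Q\<close> by (simp add: ind_def)
      then show ?thesis using L A0 B0 by linarith
    qed
  qed
qed


lemma card_nd: "P \<in> Prs s \<Longrightarrow> real (card {Q\<in>Prs s. nd P Q}) \<le> 4 * real s"
proof -
  assume P: "P \<in> Prs s"
  obtain i j where ij: "P = (i,j)" by (cases P)
  let ?A = "{i,j} \<times> {0..<s}" and ?B = "{0..<s} \<times> {i,j}"
  have sub: "{Q\<in>Prs s. nd P Q} \<subseteq> ?A \<union> ?B" using ij unfolding Prs_def nd_def by auto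
  have c2: "card {i,j} \<le> 2" by (simp add: card_insert_le_m1)
  have "card ?A \<le> 2 * s" using c2 by (simp add: card_cartesian_product)
  moreover have "card ?B \<le> 2 * s" using c2 by (simp add: card_cartesian_product)
  moreover have "card {Q\<in>Prs s. nd P Q} \<le> card (?A \<union> ?B)" using sub by (intro card_mono) auto
  moreover have "card (?A \<union> ?B) \<le> card ?A + card ?B" by (rule card_Un_le)
  ultimately have "card {Q\<in>Prs s. nd P Q} \<le> 4 * s" by linarith
  then show ?thesis by simp
qed

lemma second_moment:
  fixes g w :: "nat \<Rightarrow> nat \<Rightarrow> bool"
  assumes gw: "\<And>a b. g a b \<Longrightarrow> w a b" and ws: "\<And>a b. w a b = w b a"
  shows "(\<Sum>r\<in>PiE {0..<s} (\<lambda>_. {0..<m}). (cnt g s r)^2)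
    \<le> real (card (Prs s)) * (real (card (Prs s)) * (real m ^ (s-4) * (Gs g m)^2) + real m ^ (s-2) * Gs w m
       + 4 * real s * (real m ^ (s-3) * (\<Sum>a\<in>{0..<m}. (dg w m a)^2)))"
proof -
  let ?\<Omega> = "PiE {0..<s} (\<lambda>_. {0..<m})"
  let ?X = "\<lambda>r P. ind (g (r (fst P)) (r (snd P)))"
  let ?A = "real m ^ (s-4) * (Gs g m)^2" and ?B = "real m ^ (s-2) * Gs w m"
    and ?C = "real m ^ (s-3) * (\<Sum>a\<in>{0..<m}. (dg w m a)^2)"
  have C0: "?C \<ge> 0" by (intro mult_nonneg_nonneg sum_nonneg) auto
  have "(\<Sum>r\<in>?\<Omega>. (cnt g s r)^2) = (\<Sum>r\<in>?\<Omega>. \<Sum>P\<in>Prs s. \<Sum>Q\<in>Prs s. ?X r P * ?X r Q)"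
    unfolding cnt_def power2_eq_square sum_product by simp
  also have "\<dots> = (\<Sum>P\<in>Prs s. \<Sum>r\<in>?\<Omega>. \<Sum>Q\<in>Prs s. ?X r P * ?X r Q)" by (rule sum.swap)
  also have "\<dots> = (\<Sum>P\<in>Prs s. \<Sum>Q\<in>Prs s. \<Sum>r\<in>?\<Omega>. ?X r P * ?X r Q)"
    by (rule sum.cong[OF refl], rule sum.swap)
  also have "\<dots> \<le> (\<Sum>P\<in>Prs s. \<Sum>Q\<in>Prs s. ?A + ind (P = Q) * ?B + ind (nd P Q) * ?C)"
    by (intro sum_mono term_bound[OF gw ws]) (auto simp: ws)
  also have "\<dots> = (\<Sum>P\<in>Prs s. real (card (Prs s)) * ?A + ?B + ?C * (\<Sum>Q\<in>Prs s. ind (nd P Q)))"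
  proof (rule sum.cong[OF refl])
    fix P assume P: "P \<in> Prs s"
    have "(\<Sum>Q\<in>Prs s. ind (P = Q) * ?B) = (\<Sum>Q\<in>Prs s. if P = Q then ?B else 0)"
      by (rule sum.cong) (auto simp: ind_def)
    also have "\<dots> = ?B" using P by (simp add: sum.delta)
    finally have "(\<Sum>Q\<in>Prs s. ind (P = Q) * ?B) = ?B" .
    then show "(\<Sum>Q\<in>Prs s. ?A + ind (P = Q) * ?B + ind (nd P Q) * ?C)
        = real (card (Prs s)) * ?A + ?B + ?C * (\<Sum>Q\<in>Prs s. ind (nd P Q))"
    proof -
      have "(\<Sum>Q\<in>Prs s. ?A + ind (P = Q) * ?B + ind (nd P Q) * ?C)
          = (\<Sum>Q\<in>Prs s. ?A) + (\<Sum>Q\<in>Prs s. ind (P = Q) * ?B) + (\<Sum>Q\<in>Prs s. ind (nd P Q) * ?C)"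
        by (simp only: sum.distrib)
      moreover have "(\<Sum>Q\<in>Prs s. ind (nd P Q) * ?C) = (\<Sum>Q\<in>Prs s. ind (nd P Q)) * ?C"
        by (rule sum_distrib_right[symmetric])
      ultimately show ?thesis using \<open>(\<Sum>Q\<in>Prs s. ind (P = Q) * ?B) = ?B\<close> by simp
    qed
  qed
  also have "\<dots> \<le> (\<Sum>P\<in>Prs s. real (card (Prs s)) * ?A + ?B + ?C * (4 * real s))"
  proof (rule sum_mono)
    fix P assume P: "P \<in> Prs s"
    have "(\<Sum>Q\<in>Prs s. ind (nd P Q)) \<le> 4 * real s" using card_nd[OF P] by (simp add: sum_ind)
    then show "real (card (Prs s)) * ?A + ?B + ?C * (\<Sum>Q\<in>Prs s. ind (nd P Q))
        \<le> real (card (Prs s)) * ?A + ?B + ?C * (4 * real s)"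
      using C0 by (simp add: mult_left_mono)
  qed
  also have "\<dots> = real (card (Prs s)) * (real (card (Prs s)) * ?A + ?B + 4 * real s * ?C)"
    by (simp add: algebra_simps)
  finally show ?thesis .
qed


lemma var_identity:
  fixes X :: "'b \<Rightarrow> real"
  assumes "finite \<Omega>" "\<Omega> \<noteq> {}"
  shows "(\<Sum>x\<in>\<Omega>. (X x - (\<Sum>y\<in>\<Omega>. X y) / card \<Omega>)^2)
       = (\<Sum>x\<in>\<Omega>. (X x)^2) - (\<Sum>y\<in>\<Omega>. X y)^2 / card \<Omega>"
proof -
  define S where "S = (\<Sum>y\<in>\<Omega>. X y)"
  define N where "N = real (card \<Omega>)"
  have N: "N > 0" using assms unfolding N_def by (simp add: card_gt_0_iff)
  have "(\<Sum>x\<in>\<Omega>. (X x - S / N)^2) = (\<Sum>x\<in>\<Omega>. (X x)^2 - 2 * (S/N) * X x + (S/N)^2)"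
    by (rule sum.cong) (auto simp: power2_diff)
  also have "\<dots> = (\<Sum>x\<in>\<Omega>. (X x)^2) - 2 * (S/N) * S + N * (S/N)^2"
  proof -
    have a: "(\<Sum>x\<in>\<Omega>. 2*(S/N)*X x) = 2*(S/N)*S" unfolding S_def by (rule sum_distrib_left[symmetric])
    have b: "(\<Sum>x\<in>\<Omega>. (S/N)^2) = N*(S/N)^2" by (simp add: N_def)
    show ?thesis by (simp only: sum.distrib sum_subtractf a b)
  qed
  also have "\<dots> = (\<Sum>x\<in>\<Omega>. (X x)^2) - S^2 / N"
    using N by (simp add: field_simps power2_eq_square)
  finally show ?thesis unfolding S_def N_def .
qed

lemma cheb:
  fixes X :: "'b \<Rightarrow> real"
  assumes "finite \<Omega>" "t > 0"
  shows "real (card {x\<in>\<Omega>. t < \<bar>X x - \<mu>\<bar>}) * t^2 \<le> (\<Sum>x\<in>\<Omega>. (X x - \<mu>)^2)"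
proof -
  let ?B = "{x\<in>\<Omega>. t < \<bar>X x - \<mu>\<bar>}"
  have "real (card ?B) * t^2 = (\<Sum>x\<in>?B. t^2)" by simp
  also have "\<dots> \<le> (\<Sum>x\<in>?B. (X x - \<mu>)^2)"
  proof (rule sum_mono)
    fix x assume "x \<in> ?B"
    then have "t < \<bar>X x - \<mu>\<bar>" by simp
    then have "t^2 \<le> \<bar>X x - \<mu>\<bar>^2" using assms(2) by (intro power_mono) auto
    then show "t^2 \<le> (X x - \<mu>)^2" by simp
  qed
  also have "\<dots> \<le> (\<Sum>x\<in>\<Omega>. (X x - \<mu>)^2)" using assms(1) by (intro sum_mono2) auto
  finally show ?thesis .
qed

lemma var_bound:
  fixes g w :: "nat \<Rightarrow> nat \<Rightarrow> bool"
  assumes gw: "\<And>a b. g a b \<Longrightarrow> w a b" and ws: "\<And>a b. w a b = w b a"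
    and s4: "s \<ge> 4" and m0: "m > 0"
  defines "\<Omega> \<equiv> PiE {0..<s} (\<lambda>_. {0..<m})"
  shows "(\<Sum>r\<in>\<Omega>. (cnt g s r - (\<Sum>r\<in>\<Omega>. cnt g s r) / card \<Omega>)^2)
    \<le> real m ^ s * (real (card (Prs s)) * Gs w m / real m ^ 2
       + 4 * real s * real (card (Prs s)) * (\<Sum>a\<in>{0..<m}. (dg w m a)^2) / real m ^ 3)"
proof -
  define M where "M = real m"
  define Ps where "Ps = real (card (Prs s))"
  define D where "D = (\<Sum>a\<in>{0..<m}. (dg w m a)^2)"
  have M: "M > 0" using m0 unfolding M_def by simp
  have fin: "finite \<Omega>" unfolding \<Omega>_def by (simp add: finite_PiE)
  have cardO: "card \<Omega> = m ^ s" unfolding \<Omega>_def by (simp add: card_PiE_const)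
  then have ne: "\<Omega> \<noteq> {}" using m0 by (metis card.empty power_not_zero zero_less_iff_neq_zero)
  have p2: "M ^ (s-2) = M ^ s / M^2" and p3: "M ^ (s-3) = M ^ s / M^3" and p4: "M ^ (s-4) = M ^ s / M^4"
    using M s4 by (simp_all add: power_diff)
  have S1: "(\<Sum>r\<in>\<Omega>. cnt g s r) = Ps * (M ^ s / M^2) * Gs g m"
    using first_moment[where s=s and m=m and g=g] s4 p2 unfolding \<Omega>_def M_def Ps_def by simp
  have S2: "(\<Sum>r\<in>\<Omega>. (cnt g s r)^2) \<le> Ps * (Ps * (M ^ s / M^4 * (Gs g m)^2) + M ^ s / M^2 * Gs w m
       + 4 * real s * (M ^ s / M^3 * D))"
    using second_moment[OF gw ws, where s=s and m=m] p2 p3 p4 unfolding \<Omega>_def M_def Ps_def D_def by simp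
  have "(\<Sum>r\<in>\<Omega>. (cnt g s r - (\<Sum>r\<in>\<Omega>. cnt g s r) / card \<Omega>)^2)
      = (\<Sum>r\<in>\<Omega>. (cnt g s r)^2) - (\<Sum>r\<in>\<Omega>. cnt g s r)^2 / card \<Omega>"
    by (rule var_identity[OF fin ne])
  also have "(\<Sum>r\<in>\<Omega>. cnt g s r)^2 / card \<Omega> = Ps * (Ps * (M ^ s / M^4 * (Gs g m)^2))"
    unfolding S1 cardO using M by (simp add: M_def field_simps power2_eq_square eval_nat_numeral)
  finally have "(\<Sum>r\<in>\<Omega>. (cnt g s r - (\<Sum>r\<in>\<Omega>. cnt g s r) / card \<Omega>)^2)
      \<le> Ps * (M ^ s / M^2 * Gs w m + 4 * real s * (M ^ s / M^3 * D))"
    using S2 by (simp add: algebra_simps)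
  also have "\<dots> = M ^ s * (Ps * Gs w m / M ^ 2 + 4 * real s * Ps * D / M ^ 3)"
    by (simp add: field_simps)
  finally show ?thesis unfolding M_def Ps_def D_def .
qed



lemma key_ineq:
  fixes M W sW sT Ps \<beta> s :: real
  assumes M: "M > 0" and W: "W > 0" and sT: "sT > 0" "sT \<le> sW" and sW: "sW^2 = W" "sW > 0"
    and b: "\<beta> > 0" "\<beta> < 1" and Ps: "Ps \<ge> s^2/4" and s: "s > 0"
    and big: "\<beta>^3 * sT * s \<ge> 10000 * M"
  shows "Ps*2*W/M^2 + 16*s*Ps*W*sW/M^3 < \<beta>^3 * (Ps*2*W/M^2)^2 / 125"
proof -
  define x where "x = Ps*2*W/M^2"
  define y where "y = \<beta>^3 * x / 250"
  define z where "z = 8*s*sW/M"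
  have b3: "\<beta>^3 > 0" "\<beta>^3 \<le> 1" using b by (auto simp: power_le_one)
  have "s^2/4 > 0" using s by simp
  then have Ps0: "Ps > 0" using Ps by linarith
  have x0: "x > 0" unfolding x_def using Ps0 W M by simp
  have sTW: "sT^2 \<le> W" using power_mono[OF sT(2), of 2] sT sW by simp
  have big2: "(\<beta>^3 * sT * s)^2 \<ge> (10000 * M)^2" using big M by (intro power_mono) auto
  have "\<beta>^3 * (\<beta>^3 * (s^2 * sT^2)) \<ge> 10000^2 * M^2" using big2 by (simp add: power_mult_distrib algebra_simps)
  moreover have "\<beta>^3 * (\<beta>^3 * (s^2 * sT^2)) \<le> \<beta>^3 * (s^2 * sT^2)"
    using b3 by (intro mult_left_le_one_le) auto
  ultimately have "\<beta>^3 * (s^2 * sT^2) \<ge> 10000^2 * M^2" by linarith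
  moreover have "\<beta>^3 * (s^2 * sT^2) \<le> \<beta>^3 * (4 * Ps * W)"
  proof -
    have "s^2 * sT^2 \<le> (4*Ps) * W" using Ps sTW Ps0 by (intro mult_mono) (auto simp: W less_imp_le)
    then show ?thesis using b3 by (simp add: mult_left_mono)
  qed
  moreover have "\<beta>^3 * (4 * Ps * W) = 4 * (\<beta>^3 * Ps * W)" by simp
  moreover have "M^2 > 0" using M by simp
  moreover have "(10000::real)^2 * M^2 = 100000000 * M^2" by simp
  ultimately have a1: "250 * M^2 < 2 * (\<beta>^3 * Ps * W)" by linarith
  have ya: "1 < y" unfolding y_def x_def using a1 M by (simp add: field_simps)
  have "\<beta>^3 * Ps * sW \<ge> \<beta>^3 * (s^2/4) * sT" using Ps sT b3 Ps0 by (intro mult_mono) auto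
  moreover have "\<beta>^3 * (s^2/4) * sT = s * (\<beta>^3 * sT * s) / 4" by (simp add: power2_eq_square algebra_simps)
  moreover have "s * (\<beta>^3 * sT * s) \<ge> s * (10000 * M)" using big s by (intro mult_left_mono) auto
  moreover have "s * (10000 * M) / 4 = 2500 * s * M" by simp
  ultimately have b1: "\<beta>^3 * Ps * sW \<ge> 2500 * s * M" by linarith
  have "2000 * s * sW * M \<le> 2 * (\<beta>^3 * Ps * W)"
  proof -
    have "0 \<le> s * M" using s M by simp
    then have "2000 * s * M \<le> 2 * (\<beta>^3 * Ps * sW)" using b1 by linarith
    then have "(2000 * s * M) * sW \<le> 2 * (\<beta>^3 * Ps * sW) * sW" using sW by (intro mult_right_mono) auto
    moreover have "2 * (\<beta>^3 * Ps * sW) * sW = 2 * (\<beta>^3 * Ps * W)"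
      by (simp add: sW(1)[symmetric] power2_eq_square algebra_simps)
    moreover have "(2000 * s * M) * sW = 2000 * s * sW * M" by (simp add: algebra_simps)
    ultimately show ?thesis by linarith
  qed
  then have "(2000 * s * sW * M) / (250 * M^2) \<le> (2 * (\<beta>^3 * Ps * W)) / (250 * M^2)"
    using M by (intro divide_right_mono) auto
  moreover have "z = (2000 * s * sW * M) / (250 * M^2)" unfolding z_def using M
    by (simp add: field_simps power2_eq_square)
  moreover have "y = (2 * (\<beta>^3 * Ps * W)) / (250 * M^2)" unfolding y_def x_def using M
    by (simp add: field_simps power2_eq_square)
  ultimately have zy: "z \<le> y" by simp
  have "x * 1 < x * y" using x0 ya by (intro mult_strict_left_mono) auto
  moreover have "x * z \<le> x * y" using x0 zy by (intro mult_left_mono) auto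
  ultimately have "x + x * z < 2 * x * y" by simp
  moreover have "16*s*Ps*W*sW/M^3 = x * z" unfolding x_def z_def using M
    by (simp add: field_simps power2_eq_square power3_eq_cube)
  moreover have "\<beta>^3 * x^2 / 125 = 2 * x * y" unfolding y_def by (simp add: power2_eq_square)
  ultimately show ?thesis unfolding x_def by simp
qed


lemma ratio_bound:
  fixes EY q \<beta> y z :: real
  assumes EY: "EY > 0" and q: "0 \<le> q" "q \<le> 1" and b: "0 < \<beta>" "\<beta> < 1"
    and hy: "\<bar>y - EY\<bar> \<le> \<beta>/5 * EY" and hz: "\<bar>z - q * EY\<bar> \<le> \<beta>/5 * EY"
  shows "\<bar>z / y - q\<bar> \<le> 4 * (\<beta>/5)"
proof -
  have "EY - y \<le> \<beta>/5 * EY" using hy abs_ge_minus_self[of "y - EY"] by linarith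
  moreover have "\<beta>/5 * EY \<le> 1/5 * EY" using b EY by (intro mult_right_mono) auto
  ultimately have y: "y \<ge> 4/5 * EY" by linarith
  then have y0: "y > 0" using EY by simp
  have "\<bar>q * EY - q * y\<bar> = q * \<bar>EY - y\<bar>" using q by (simp add: abs_mult right_diff_distrib[symmetric])
  also have "\<dots> \<le> 1 * (\<beta>/5 * EY)" using q hy by (intro mult_mono) (auto simp: abs_minus_commute)
  finally have "\<bar>q * EY - q * y\<bar> \<le> \<beta>/5 * EY" by simp
  then have zq: "\<bar>z - q * y\<bar> \<le> 2 * (\<beta>/5 * EY)" using hz by linarith
  have "\<bar>z / y - q\<bar> = \<bar>z - q * y\<bar> / y" using y0 by (simp add: field_simps)
  also have "\<dots> \<le> 2 * (\<beta>/5 * EY) / y" using zq y0 by (intro divide_right_mono) auto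
  also have "\<dots> \<le> 2 * (\<beta>/5 * EY) / (4/5 * EY)" using y EY b by (intro divide_left_mono) auto
  also have "\<dots> = \<beta> / 2" using EY by (simp add: field_simps)
  also have "\<dots> \<le> 4 * (\<beta>/5)" using b by simp
  finally show ?thesis .
qed

lemma avg_bound:
  fixes f :: "'b \<Rightarrow> real"
  assumes "finite A" "A \<noteq> {}" "\<And>x. x \<in> A \<Longrightarrow> \<bar>f x - q\<bar> \<le> e"
  shows "\<bar>(\<Sum>x\<in>A. f x) / real (card A) - q\<bar> \<le> e"
proof -
  have c: "real (card A) > 0" using assms by (simp add: card_gt_0_iff)
  have "(\<Sum>x\<in>A. f x) / real (card A) - q = (\<Sum>x\<in>A. f x - q) / real (card A)"
    using c by (simp add: sum_subtractf field_simps)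
  then have "\<bar>(\<Sum>x\<in>A. f x) / real (card A) - q\<bar> = \<bar>\<Sum>x\<in>A. f x - q\<bar> / real (card A)"
    by simp
  also have "\<dots> \<le> (\<Sum>x\<in>A. \<bar>f x - q\<bar>) / real (card A)"
    using c by (intro divide_right_mono sum_abs) auto
  also have "\<dots> \<le> (\<Sum>x\<in>A. e) / real (card A)"
    using c assms(3) by (intro divide_right_mono sum_mono) auto
  also have "\<dots> = e" using c by simp
  finally show ?thesis .
qed

lemma core:
  fixes es :: "nat set list" and \<beta> :: real and s :: nat
  assumes es: "edge_stream es" and T1: "num_triangles es \<ge> 1" and b: "0 < \<beta>" "\<beta> < 1"
    and sbig: "real s \<ge> 10000 * real (length es) / (\<beta> ^ 3 * sqrt (real (num_triangles es)))"
  shows "(let \<Omega> = samples es s;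
           Y = (\<lambda>r. real (Ycount es s r));
           Z = (\<lambda>r. real (Zcount es s r));
           \<beta>' = \<beta> / 5;
           \<kappa> = 3 * real (num_triangles es) / real (num_wedges es);
           \<E> = (\<lambda>r. max \<bar>Y r - uexp \<Omega> Y\<bar> \<bar>Z r - uexp \<Omega> Z\<bar> \<le> \<beta>' * uexp \<Omega> Y)
       in uprob \<Omega> \<E> > 1 - 2 * \<beta>' \<and>
          (\<forall>r\<in>\<Omega>. \<E> r \<longrightarrow> Y r > 0) \<and>
          \<bar>ucondexp \<Omega> \<E> (\<lambda>r. Z r / Y r) - \<kappa> / 3\<bar> \<le> 4 * \<beta>')"
proof -
  define m where "m = length es"
  define M where "M = real m"
  define W where "W = real (num_wedges es)"
  define T where "T = real (num_triangles es)"
  define w where "w = (\<lambda>p q. is_wedge (es!p) (es!q))"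
  define fz where "fz = (\<lambda>p q. fc_wedge_pos es p q)"
  have ws: "\<And>a b. w a b = w b a" by (simp add: w_def is_wedge_sym)
  have fw: "\<And>a b. fz a b \<Longrightarrow> w a b"
    unfolding fz_def w_def fc_wedge_pos_def fc_pos_def by (auto simp: is_wedge_sym)
  have ww: "\<And>a b. w a b \<Longrightarrow> w a b" by simp
  have GW: "Gs w m = 2 * W" using Gs_card[of m w] wedge_count[OF es] unfolding w_def W_def m_def by simp
  have GT: "Gs fz m = 2 * T" using Gs_card[of m fz] fc_count[OF es] unfolding fz_def T_def m_def by simp
  have TW: "T \<le> W" using Gs_mono[of fz w m, OF fw] GW GT by simp
  have GWle: "Gs w m \<le> M^2"
  proof -
    have "Gs w m \<le> (\<Sum>a\<in>{0..<m}. \<Sum>b\<in>{0..<m}. (1::real))" unfolding Gs_def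
      by (intro sum_mono) (auto simp: ind_le1)
    then show ?thesis by (simp add: M_def power2_eq_square)
  qed
  have T1': "T \<ge> 1" using T1 unfolding T_def by simp
  have W1: "W \<ge> 1" using TW T1' by simp
  have M2: "M^2 \<ge> 2" using GWle GW W1 by simp
  have M0: "M > 0"
  proof -
    have "M \<ge> 0" unfolding M_def by simp
    moreover have "M \<noteq> 0" using M2 by auto
    ultimately show ?thesis by simp
  qed
  have m0: "m > 0" using M0 unfolding M_def by simp
  define sT where "sT = sqrt T"
  define sW where "sW = sqrt W"
  have sT0: "sT > 0" unfolding sT_def using T1' by simp
  have sTW: "sT \<le> sW" unfolding sT_def sW_def using TW by simp
  have sW2: "sW^2 = W" unfolding sW_def using W1 by simp
  have sW0: "sW > 0" unfolding sW_def using W1 by simp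
  have sWM: "sW \<le> M"
  proof -
    have "sW \<le> sqrt (M^2)" unfolding sW_def using GWle GW W1 by (intro real_sqrt_le_mono) simp
    then show ?thesis using M0 by simp
  qed
  have b3: "\<beta>^3 > 0" "\<beta>^3 \<le> 1" using b by (auto simp: power_le_one)
  have big: "\<beta>^3 * sT * real s \<ge> 10000 * M"
  proof -
    have "10000 * M / (\<beta>^3 * sT) \<le> real s" using sbig unfolding M_def m_def sT_def T_def .
    then show ?thesis using b3 sT0 by (simp add: pos_divide_le_eq mult.commute mult.left_commute)
  qed
  have s_big: "real s \<ge> 10000"
  proof -
    have "sT * real s \<ge> \<beta>^3 * (sT * real s)" using b3 sT0 by (intro mult_left_le_one_le) auto
    then have "sT * real s \<ge> 10000 * sT" using big sTW sWM by (simp add: mult.assoc)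
    then show ?thesis using sT0 by (simp add: mult.commute)
  qed
  have s4: "s \<ge> 4" using s_big by linarith
  define Ps where "Ps = real (card (Prs s))"
  have Ps_eq: "2 * Ps = real s * (real s - 1)"
  proof -
    have "real (2 * card (Prs s)) = real (s * (s - 1))" using card_Prs[of s] by simp
    then show ?thesis using s4 unfolding Ps_def by (simp add: of_nat_diff)
  qed
  have Ps4: "Ps \<ge> (real s)^2 / 4"
  proof -
    have "2 * real s \<le> real s * real s" using s_big by (intro mult_right_mono) auto
    then have "real s * (real s - 1) \<ge> (real s)^2 / 2" by (simp add: power2_eq_square algebra_simps)
    then show ?thesis using Ps_eq by simp
  qed
  define \<Omega> where "\<Omega> = samples es s"
  have \<Omega>_eq: "\<Omega> = PiE {0..<s} (\<lambda>_. {0..<m})" unfolding \<Omega>_def samples_def m_def by simp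
  have finO: "finite \<Omega>" unfolding \<Omega>_eq by (simp add: finite_PiE)
  have cardO: "real (card \<Omega>) = M ^ s" unfolding \<Omega>_eq M_def by (simp add: card_PiE_const)
  have N0: "M ^ s > 0" using M0 by simp
  have eY: "(\<lambda>r. real (Ycount es s r)) = cnt w s"
    using cnt_card[of s w] unfolding Ycount_def w_def by simp
  have eZ: "(\<lambda>r. real (Zcount es s r)) = cnt fz s"
    using cnt_card[of s fz] unfolding Zcount_def fz_def by simp
  have mean: "uexp \<Omega> (cnt g s) = Ps * Gs g m / M^2" for g
  proof -
    have "M ^ (s-2) = M ^ s / M^2" using M0 s4 by (simp add: power_diff)
    then show ?thesis unfolding uexp_def using first_moment[where s=s and m=m and g=g] s4 cardO M0
      unfolding \<Omega>_eq M_def Ps_def by simp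
  qed
  define EY where "EY = Ps * (2 * W) / M^2"
  have EYd: "uexp \<Omega> (cnt w s) = EY" unfolding EY_def using mean GW by simp
  have EZd: "uexp \<Omega> (cnt fz s) = (T / W) * EY" unfolding EY_def using mean GT W1 by (simp add: field_simps)
  have Ps0: "Ps > 0" using Ps4 s_big by (smt (verit) divide_pos_pos zero_less_power)
  have EY0: "EY > 0" unfolding EY_def using Ps0 W1 M0 by simp
  define D where "D = (\<Sum>a\<in>{0..<m}. (dg w m a)^2)"
  have dg_le: "dg w m a \<le> 2 * sW" if a: "a \<in> {0..<m}" for a
  proof -
    have "dg w m a = real (card {q\<in>{0..<m}. w a q})" unfolding dg_def by (simp add: sum_ind)
    also have "{q\<in>{0..<m}. w a q} = {q. q<length es \<and> is_wedge (es!a) (es!q)}"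
      unfolding w_def m_def by auto
    finally have e: "dg w m a = real (card {q. q<length es \<and> is_wedge (es!a) (es!q)})" .
    have "(card {q. q<length es \<and> is_wedge (es!a) (es!q)})^2 \<le> 2 * (2 * num_wedges es)"
      using deg_bound[OF es, of a] wedge_count[OF es] a unfolding m_def by simp
    then have "(dg w m a)^2 \<le> 4 * W" unfolding e W_def
      by (metis (mono_tags, lifting) of_nat_le_iff of_nat_mult of_nat_numeral of_nat_power mult.assoc numeral_Bit0 numeral_times_numeral semiring_norm(12) num_double)
    then have "dg w m a \<le> sqrt (4 * W)" by (rule real_le_rsqrt)
    also have "sqrt (4 * W) = 2 * sW" unfolding sW_def by (simp add: real_sqrt_mult)
    finally show ?thesis .
  qed
  have D_le: "D \<le> 4 * W * sW"
  proof -
    have "D \<le> (\<Sum>a\<in>{0..<m}. dg w m a * (2 * sW))" unfolding D_def power2_eq_square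
    proof (rule sum_mono)
      fix a assume a: "a \<in> {0..<m}"
      have "dg w m a \<ge> 0" unfolding dg_def by (intro sum_nonneg) auto
      then show "dg w m a * dg w m a \<le> dg w m a * (2 * sW)" using dg_le[OF a] by (intro mult_left_mono)
    qed
    also have "\<dots> = (\<Sum>a\<in>{0..<m}. dg w m a) * (2 * sW)" by (simp add: sum_distrib_right)
    also have "(\<Sum>a\<in>{0..<m}. dg w m a) = Gs w m" unfolding dg_def Gs_def by simp
    finally show ?thesis using GW by simp
  qed
  define V where "V = Ps*2*W/M^2 + 16*real s*Ps*W*sW/M^3"
  have keyV: "V < \<beta>^3 * EY^2 / 125"
    unfolding V_def EY_def using key_ineq[OF M0 _ sT0 sTW sW2 sW0 b Ps4 _ big] W1 s_big by (simp add: mult.assoc)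
  have var: "(\<Sum>r\<in>\<Omega>. (cnt g s r - uexp \<Omega> (cnt g s))^2) \<le> M ^ s * V" if gw: "\<And>a b. g a b \<Longrightarrow> w a b" for g
  proof -
    have "(\<Sum>r\<in>\<Omega>. (cnt g s r - uexp \<Omega> (cnt g s))^2)
        \<le> M ^ s * (Ps * Gs w m / M ^ 2 + 4 * real s * Ps * D / M ^ 3)"
      using var_bound[OF gw ws s4 m0] unfolding \<Omega>_eq[symmetric] uexp_def M_def Ps_def D_def by simp
    also have "\<dots> \<le> M ^ s * V"
    proof -
      have "4 * real s * Ps * D / M ^ 3 \<le> 4 * real s * Ps * (4 * W * sW) / M ^ 3"
        using D_le Ps0 M0 by (intro divide_right_mono mult_left_mono) auto
      then show ?thesis unfolding V_def using N0 GW by (intro mult_left_mono) (auto simp: algebra_simps)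
    qed
    finally show ?thesis .
  qed
  define t where "t = \<beta> / 5 * EY"
  have t0: "t > 0" unfolding t_def using b EY0 by simp
  have bad: "real (card {r\<in>\<Omega>. t < \<bar>cnt g s r - uexp \<Omega> (cnt g s)\<bar>}) < \<beta> / 5 * M ^ s"
    if gw: "\<And>a b. g a b \<Longrightarrow> w a b" for g
  proof -
    have "real (card {r\<in>\<Omega>. t < \<bar>cnt g s r - uexp \<Omega> (cnt g s)\<bar>}) * t^2 \<le> M ^ s * V"
      using cheb[OF finO t0, of "cnt g s" "uexp \<Omega> (cnt g s)"] var[where g=g, OF gw] by linarith
    also have "\<dots> < M ^ s * (\<beta> / 5 * t^2)"
    proof -
      have "\<beta> / 5 * t^2 = \<beta>^3 * EY^2 / 125" unfolding t_def by (simp add: power2_eq_square power3_eq_cube)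
      then show ?thesis using keyV N0 by simp
    qed
    finally show ?thesis using t0 by (simp add: mult.commute mult.left_commute)
  qed
  define Ev where "Ev = (\<lambda>r. max \<bar>cnt w s r - uexp \<Omega> (cnt w s)\<bar> \<bar>cnt fz s r - uexp \<Omega> (cnt fz s)\<bar>
     \<le> \<beta>/5 * uexp \<Omega> (cnt w s))"
  define BY where "BY = {r\<in>\<Omega>. t < \<bar>cnt w s r - uexp \<Omega> (cnt w s)\<bar>}"
  define BZ where "BZ = {r\<in>\<Omega>. t < \<bar>cnt fz s r - uexp \<Omega> (cnt fz s)\<bar>}"
  have nE: "{r\<in>\<Omega>. \<not> Ev r} \<subseteq> BY \<union> BZ" unfolding Ev_def BY_def BZ_def t_def EYd by auto
  have "card {r\<in>\<Omega>. \<not> Ev r} \<le> card (BY \<union> BZ)" using nE finO unfolding BY_def BZ_def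
    by (intro card_mono) auto
  also have "\<dots> \<le> card BY + card BZ" by (rule card_Un_le)
  finally have "real (card {r\<in>\<Omega>. \<not> Ev r}) \<le> real (card BY) + real (card BZ)" by linarith
  moreover have "real (card BY) < \<beta>/5 * M^s" using bad[OF ww] unfolding BY_def .
  moreover have "real (card BZ) < \<beta>/5 * M^s" using bad[OF fw] unfolding BZ_def .
  ultimately have cnE: "real (card {r\<in>\<Omega>. \<not> Ev r}) < 2 * (\<beta>/5) * M^s" by linarith
  have U: "{r\<in>\<Omega>. Ev r} \<union> {r\<in>\<Omega>. \<not> Ev r} = \<Omega>" by auto
  have "card ({r\<in>\<Omega>. Ev r} \<union> {r\<in>\<Omega>. \<not> Ev r}) = card {r\<in>\<Omega>. Ev r} + card {r\<in>\<Omega>. \<not> Ev r}"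
    using finO by (intro card_Un_disjoint) auto
  then have "card {r\<in>\<Omega>. Ev r} + card {r\<in>\<Omega>. \<not> Ev r} = card \<Omega>" using U by simp
  then have "real (card {r\<in>\<Omega>. Ev r}) + real (card {r\<in>\<Omega>. \<not> Ev r}) = M^s"
    using cardO by (metis of_nat_add)
  then have cE: "real (card {r\<in>\<Omega>. Ev r}) = M^s - real (card {r\<in>\<Omega>. \<not> Ev r})" by linarith
  have P1: "uprob \<Omega> Ev > 1 - 2 * (\<beta>/5)"
  proof -
    have "real (card {r\<in>\<Omega>. Ev r}) > (1 - 2 * (\<beta>/5)) * M^s" using cE cnE by (simp add: algebra_simps)
    then show ?thesis unfolding uprob_def cardO using N0 by (simp add: pos_less_divide_eq)
  qed
  have P2: "\<forall>r\<in>\<Omega>. Ev r \<longrightarrow> cnt w s r > 0"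
  proof (intro ballI impI)
    fix r assume "r \<in> \<Omega>" "Ev r"
    then have "\<bar>cnt w s r - EY\<bar> \<le> \<beta>/5 * EY" unfolding Ev_def EYd max.bounded_iff by simp
    then have "cnt w s r \<ge> EY - \<beta>/5 * EY" by linarith
    moreover have "\<beta>/5 * EY < EY" using b EY0 by simp
    ultimately show "cnt w s r > 0" by linarith
  qed
  have P3: "\<bar>ucondexp \<Omega> Ev (\<lambda>r. cnt fz s r / cnt w s r) - (3 * T / W) / 3\<bar> \<le> 4 * (\<beta>/5)"
  proof -
    have ne: "{r\<in>\<Omega>. Ev r} \<noteq> {}"
    proof
      assume "{r\<in>\<Omega>. Ev r} = {}"
      then have "uprob \<Omega> Ev = 0" unfolding uprob_def by (simp only: card.empty of_nat_0 div_0)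
      then show False using P1 b by simp
    qed
    have q: "0 \<le> T/W" "T/W \<le> 1" using TW T1' W1 by auto
    have "\<bar>(\<Sum>r\<in>{r\<in>\<Omega>. Ev r}. cnt fz s r / cnt w s r) / real (card {r\<in>\<Omega>. Ev r}) - T/W\<bar> \<le> 4 * (\<beta>/5)"
    proof (rule avg_bound)
      show "finite {r\<in>\<Omega>. Ev r}" using finO by simp
      show "{r\<in>\<Omega>. Ev r} \<noteq> {}" by (rule ne)
      fix r assume "r \<in> {r\<in>\<Omega>. Ev r}"
      then have "\<bar>cnt w s r - EY\<bar> \<le> \<beta>/5 * EY" "\<bar>cnt fz s r - T/W * EY\<bar> \<le> \<beta>/5 * EY"
        unfolding Ev_def EYd EZd max.bounded_iff by auto
      then show "\<bar>cnt fz s r / cnt w s r - T/W\<bar> \<le> 4 * (\<beta>/5)"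
        using ratio_bound[OF EY0 q b] by blast
    qed
    moreover have "(3 * T / W) / 3 = T / W" by simp
    ultimately show ?thesis unfolding ucondexp_def uexp_def by simp
  qed
  have "uprob \<Omega> Ev > 1 - 2 * (\<beta>/5) \<and> (\<forall>r\<in>\<Omega>. Ev r \<longrightarrow> cnt w s r > 0) \<and>
     \<bar>ucondexp \<Omega> Ev (\<lambda>r. cnt fz s r / cnt w s r) - (3 * T / W) / 3\<bar> \<le> 4 * (\<beta>/5)"
    using P1 P2 P3 by blast
  then show ?thesis unfolding Let_def eY eZ \<Omega>_def[symmetric] T_def[symmetric] W_def[symmetric] Ev_def by blast
qed


theorem mainTheorem9:
  "\<exists>c::real. c > 0 \<and> (\<exists>\<beta>0::real. \<beta>0 > 0 \<and>
    (\<forall>(es :: nat set list) (\<beta>::real) (s::nat).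
      edge_stream es \<longrightarrow>
      num_wedges es \<ge> length es \<longrightarrow>
      num_triangles es \<ge> 1 \<longrightarrow>
      0 < \<beta> \<longrightarrow> \<beta> < \<beta>0 \<longrightarrow>
      real s \<ge> c * real (length es) / (\<beta> ^ 3 * sqrt (real (num_triangles es))) \<longrightarrow>
      (let \<Omega> = samples es s;
           Y = (\<lambda>r. real (Ycount es s r));
           Z = (\<lambda>r. real (Zcount es s r));
           \<beta>' = \<beta> / 5;
           \<kappa> = 3 * real (num_triangles es) / real (num_wedges es);
           \<E> = (\<lambda>r. max \<bar>Y r - uexp \<Omega> Y\<bar> \<bar>Z r - uexp \<Omega> Z\<bar> \<le> \<beta>' * uexp \<Omega> Y)
       in uprob \<Omega> \<E> > 1 - 2 * \<beta>' \<and>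
          (\<forall>r\<in>\<Omega>. \<E> r \<longrightarrow> Y r > 0) \<and>
          \<bar>ucondexp \<Omega> \<E> (\<lambda>r. Z r / Y r) - \<kappa> / 3\<bar> \<le> 4 * \<beta>')))"
    apply (rule exI[of _ "10000::real"])
  apply (rule conjI)
   apply simp
  apply (rule exI[of _ "1::real"])
  apply (rule conjI)
   apply simp
  apply (intro allI impI)
  apply (rule core)
      apply assumption+
  done

end
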